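(* Let $v\ge 1$, $\epsilon>0$, and let $z\in[0,1]^v$. Suppose we are given real values $\hat f_s$, one for each $s\in\{0,1\}^v$, satisfying $\left|\hat f_s-\frac1v\langle s,z\rangle\right|\le\epsilon$ for all $s\in\{0,1\}^v$. Then it is possible, using only the values $\{\hat f_s\}$, to identify a vector $\hat z\in[0,1]^v$ satisfying $\frac1v\|\hat z-z\|_1\le 4\epsilon$.
   Context: $\langle s,z\rangle=\sum_{i=1}^v s_iz_i$. In the paper $z=(f_T(\mathcal{D}_1),\dots,f_T(\mathcal{D}_v))$ is the vector of frequencies of a fixed itemset $T$ in $v$ databases, and $\hat f_s$ are approximate answers to associated itemset queries, but the statement only uses $z\in[0,1]^v$. *)

theory Defs
  imports Complex_Main
begin

(* A 0/1 vector s in {0,1}^v is represented by its support S \<subseteq> {..<v};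
   a real vector z in R^v by a function nat \<Rightarrow> real restricted to indices < v. *)
definition inner01 :: "nat set \<Rightarrow> (nat \<Rightarrow> real) \<Rightarrow> real" where
  "inner01 S z = (\<Sum>i\<in>S. z i)"

end

theory Submission
  imports Defs
begin

definition cons01 :: "nat \<Rightarrow> real \<Rightarrow> (nat set \<Rightarrow> real) \<Rightarrow> (nat \<Rightarrow> real) \<Rightarrow> bool" where
  "cons01 v e fhat w \<longleftrightarrow> (\<forall>i<v. 0 \<le> w i \<and> w i \<le> 1) \<and>
     (\<forall>S. S \<subseteq> {..<v} \<longrightarrow> \<bar>fhat S - (1 / real v) * inner01 S w\<bar> \<le> e)"

lemma key:
  fixes v :: nat and e :: real
  assumes v: "v \<ge> 1"
    and h: "\<forall>S. S \<subseteq> {..<v} \<longrightarrow> \<bar>(1 / real v) * inner01 S w - (1 / real v) * inner01 S z\<bar> \<le> 2 * e"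
  shows "(1 / real v) * (\<Sum>i<v. \<bar>w i - z i\<bar>) \<le> 4 * e"
proof -
  define d where "d i = w i - z i" for i
  define P where "P = {i. i < v \<and> d i > 0}"
  define N where "N = {i. i < v \<and> \<not> d i > 0}"
  have vpos: "real v > 0" using v by simp
  have hs: "\<bar>\<Sum>i\<in>S. d i\<bar> \<le> 2 * e * real v" if "S \<subseteq> {..<v}" for S
  proof -
    have "\<bar>(1 / real v) * (\<Sum>i\<in>S. d i)\<bar> \<le> 2 * e"
      using h[rule_format, OF that] by (simp add: inner01_def d_def sum_subtractf right_diff_distrib)
    then have "\<bar>\<Sum>i\<in>S. d i\<bar> / real v \<le> 2 * e" by (simp add: abs_mult)
    then show ?thesis using vpos by (simp add: divide_le_eq)
  qed
  have U: "{..<v} = P \<union> N" and D: "P \<inter> N = {}" and fP: "finite P" and fN: "finite N"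
    by (auto simp: P_def N_def)
  have "(\<Sum>i<v. \<bar>d i\<bar>) = (\<Sum>i\<in>P. \<bar>d i\<bar>) + (\<Sum>i\<in>N. \<bar>d i\<bar>)"
    unfolding U by (rule sum.union_disjoint[OF fP fN D])
  also have "(\<Sum>i\<in>P. \<bar>d i\<bar>) = (\<Sum>i\<in>P. d i)" by (rule sum.cong) (auto simp: P_def)
  also have "(\<Sum>i\<in>N. \<bar>d i\<bar>) = - (\<Sum>i\<in>N. d i)"
    by (simp add: sum_negf[symmetric]) (rule sum.cong, auto simp: N_def)
  also have "(\<Sum>i\<in>P. d i) \<le> 2 * e * real v" using hs[of P] by (force simp: P_def)
  also have "- (\<Sum>i\<in>N. d i) \<le> 2 * e * real v" using hs[of N] by (force simp: N_def)
  finally have "(\<Sum>i<v. \<bar>d i\<bar>) \<le> 4 * e * real v" by simp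
  then have "(\<Sum>i<v. \<bar>d i\<bar>) / real v \<le> 4 * e" using vpos by (simp add: divide_le_eq)
  then show ?thesis by (simp add: d_def)
qed

theorem lemma4:
  fixes v :: nat and \<epsilon> :: real
  assumes "v \<ge> 1" and "\<epsilon> > 0"
  shows "\<exists>R :: (nat set \<Rightarrow> real) \<Rightarrow> (nat \<Rightarrow> real).
    \<forall>(z :: nat \<Rightarrow> real) (fhat :: nat set \<Rightarrow> real).
      (\<forall>i<v. 0 \<le> z i \<and> z i \<le> 1) \<and>
      (\<forall>S. S \<subseteq> {..<v} \<longrightarrow> \<bar>fhat S - (1 / real v) * inner01 S z\<bar> \<le> \<epsilon>)
      \<longrightarrow> (\<forall>i<v. 0 \<le> R fhat i \<and> R fhat i \<le> 1) \<and>
          (1 / real v) * (\<Sum>i<v. \<bar>R fhat i - z i\<bar>) \<le> 4 * \<epsilon>"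
proof (intro exI[of _ "\<lambda>fhat. SOME w. cons01 v \<epsilon> fhat w"] allI impI)
  fix z :: "nat \<Rightarrow> real" and fhat :: "nat set \<Rightarrow> real"
  assume H: "(\<forall>i<v. 0 \<le> z i \<and> z i \<le> 1) \<and>
      (\<forall>S. S \<subseteq> {..<v} \<longrightarrow> \<bar>fhat S - (1 / real v) * inner01 S z\<bar> \<le> \<epsilon>)"
  then have "cons01 v \<epsilon> fhat z" by (simp add: cons01_def)
  then have W: "cons01 v \<epsilon> fhat (SOME w. cons01 v \<epsilon> fhat w)" by (metis someI_ex)
  define w where "w = (SOME w. cons01 v \<epsilon> fhat w)"
  have Ww: "cons01 v \<epsilon> fhat w" using W by (simp add: w_def)
  have "\<forall>S. S \<subseteq> {..<v} \<longrightarrow> \<bar>(1 / real v) * inner01 S w - (1 / real v) * inner01 S z\<bar> \<le> 2 * \<epsilon>"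
  proof (intro allI impI)
    fix S :: "nat set" assume S: "S \<subseteq> {..<v}"
    have a: "\<bar>fhat S - (1 / real v) * inner01 S w\<bar> \<le> \<epsilon>" using Ww S by (simp add: cons01_def)
    have b: "\<bar>fhat S - (1 / real v) * inner01 S z\<bar> \<le> \<epsilon>" using H S by blast
    show "\<bar>(1 / real v) * inner01 S w - (1 / real v) * inner01 S z\<bar> \<le> 2 * \<epsilon>"
      using a b by linarith
  qed
  from key[OF assms(1) this] Ww
  show "(\<forall>i<v. 0 \<le> (SOME w. cons01 v \<epsilon> fhat w) i \<and> (SOME w. cons01 v \<epsilon> fhat w) i \<le> 1) \<and>
          (1 / real v) * (\<Sum>i<v. \<bar>(SOME w. cons01 v \<epsilon> fhat w) i - z i\<bar>) \<le> 4 * \<epsilon>"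
    by (simp add: w_def cons01_def)
qed

end
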